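(* Let $A_0$ be a commutative ring, $d_1,\dots,d_g\in\mathbb{N}$, and let $A=A_0[Y_1,\dots,Y_g]$ be $\mathbb{Z}^2$-graded by $\deg Y_j=(d_j,1)$. Let $F$ be a finitely generated $\mathbb{Z}^2$-graded free $A$-module with homogeneous basis $e_1,\dots,e_p$, let $<$ be a monomial order on $F$, and let $U$ be a $\mathbb{Z}^2$-graded $A$-submodule of $F$. Then $\rho_{F/U}(v)=\rho_{F/\operatorname{in}_<(U)}(v)$ for all $v\in\mathbb{Z}$.
   Context: For a $\mathbb{Z}^2$-graded $A$-module $N$ and $v\in\mathbb{Z}$, $\rho_N(v)=\sup\{i\in\mathbb{Z} : N_{(i,v)}\neq0\}\in\mathbb{Z}\cup\{\pm\infty\}$. Monomials of $F$ are the elements $Y^\alpha e_k$ ($\alpha\in\mathbb{N}^g$); a monomial order on $F$ is a well-ordering of these monomials compatible with multiplication by monomials of $A$ (if $Y^\alpha e_k<Y^\beta e_l$ then $Y^\gamma Y^\alpha e_k<Y^\gamma Y^\beta e_l$). Writing a nonzero $u\in F$ as an $A_0$-linear combination of distinct monomials, its leading term $\operatorname{in}_<(u)=aY^\alpha e_k$ is the largest monomial occurring together with its (nonzero) coefficient $a\in A_0$. $\operatorname{in}_<(U)$ is the $A_0$-submodule of $F$ generated by the leading terms (with coefficients) of all nonzero elements of $U$; it is an $A$-submodule of $F$. *)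

theory Defs
  imports Main "HOL-Library.Extended_Real"
begin

text \<open>
A_0 is a commutative ring (type 'a). A = A_0[Y_0,...,Y_{g-1}] (0-based indices),
deg Y_j = (d j, 1). F is the free A-module with basis e_0,...,e_{p-1}, deg e_k = ed k.
Elements of F are represented by their coefficient functions on monomials Y^alpha e_k,
a monomial being a pair (alpha, k) with alpha :: nat => nat an exponent vector with
alpha j = 0 for j >= g, and k < p.  Elements of F are the finitely supported such
coefficient functions supported on monomials.
\<close>

type_synonym mon = "(nat \<Rightarrow> nat) \<times> nat"

definition monoms :: "nat \<Rightarrow> nat \<Rightarrow> mon set" where
  "monoms g p = {(\<alpha>, k). (\<forall>j\<ge>g. \<alpha> j = 0) \<and> k < p}"

definition expos :: "nat \<Rightarrow> (nat \<Rightarrow> nat) set" where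
  "expos g = {\<gamma>. \<forall>j\<ge>g. \<gamma> j = 0}"

definition supp :: "(mon \<Rightarrow> 'a::zero) \<Rightarrow> mon set" where
  "supp f = {m. f m \<noteq> 0}"

definition freemod :: "nat \<Rightarrow> nat \<Rightarrow> (mon \<Rightarrow> 'a::zero) set" where
  "freemod g p = {f. finite (supp f) \<and> supp f \<subseteq> monoms g p}"

definition mdeg :: "nat \<Rightarrow> (nat \<Rightarrow> nat) \<Rightarrow> (nat \<Rightarrow> int \<times> int) \<Rightarrow> mon \<Rightarrow> int \<times> int" where
  "mdeg g d ed m = (int (\<Sum>j<g. d j * fst m j) + fst (ed (snd m)),
                    int (\<Sum>j<g. fst m j) + snd (ed (snd m)))"

text \<open>Multiplication of an element of F by the monomial Y^gamma of A.\<close>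
definition mmul :: "(nat \<Rightarrow> nat) \<Rightarrow> (mon \<Rightarrow> 'a::zero) \<Rightarrow> mon \<Rightarrow> 'a" where
  "mmul \<gamma> f = (\<lambda>(\<beta>, k). if (\<forall>j. \<gamma> j \<le> \<beta> j) then f (\<lambda>j. \<beta> j - \<gamma> j, k) else 0)"

definition madd :: "(mon \<Rightarrow> 'a::plus) \<Rightarrow> (mon \<Rightarrow> 'a) \<Rightarrow> mon \<Rightarrow> 'a" where
  "madd f h = (\<lambda>m. f m + h m)"

definition msmul :: "'a::times \<Rightarrow> (mon \<Rightarrow> 'a) \<Rightarrow> mon \<Rightarrow> 'a" where
  "msmul c f = (\<lambda>m. c * f m)"

definition hcomp :: "nat \<Rightarrow> (nat \<Rightarrow> nat) \<Rightarrow> (nat \<Rightarrow> int \<times> int) \<Rightarrow> int \<times> int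
    \<Rightarrow> (mon \<Rightarrow> 'a::zero) \<Rightarrow> mon \<Rightarrow> 'a" where
  "hcomp g d ed \<delta> f = (\<lambda>m. if mdeg g d ed m = \<delta> then f m else 0)"

definition homog :: "nat \<Rightarrow> nat \<Rightarrow> (nat \<Rightarrow> nat) \<Rightarrow> (nat \<Rightarrow> int \<times> int) \<Rightarrow> int \<Rightarrow> int
    \<Rightarrow> (mon \<Rightarrow> 'a::zero) \<Rightarrow> bool" where
  "homog g p d ed i v f \<longleftrightarrow> f \<in> freemod g p \<and> (\<forall>m\<in>supp f. mdeg g d ed m = (i, v))"

text \<open>A-submodule of F (A is generated as A_0-module by the monomials Y^gamma).\<close>
definition submod :: "nat \<Rightarrow> nat \<Rightarrow> (mon \<Rightarrow> 'a::comm_ring_1) set \<Rightarrow> bool" where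
  "submod g p U \<longleftrightarrow> U \<subseteq> freemod g p \<and> (\<lambda>_. 0) \<in> U
     \<and> (\<forall>f\<in>U. \<forall>h\<in>U. madd f h \<in> U)
     \<and> (\<forall>c. \<forall>f\<in>U. msmul c f \<in> U)
     \<and> (\<forall>\<gamma>\<in>expos g. \<forall>f\<in>U. mmul \<gamma> f \<in> U)"

definition graded_submod :: "nat \<Rightarrow> nat \<Rightarrow> (nat \<Rightarrow> nat) \<Rightarrow> (nat \<Rightarrow> int \<times> int)
    \<Rightarrow> (mon \<Rightarrow> 'a::comm_ring_1) set \<Rightarrow> bool" where
  "graded_submod g p d ed U \<longleftrightarrow> submod g p U \<and> (\<forall>u\<in>U. \<forall>\<delta>. hcomp g d ed \<delta> u \<in> U)"

definition monomial_order :: "nat \<Rightarrow> nat \<Rightarrow> (mon \<Rightarrow> mon \<Rightarrow> bool) \<Rightarrow> bool" where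
  "monomial_order g p mless \<longleftrightarrow>
     (\<forall>m\<in>monoms g p. \<not> mless m m)
     \<and> (\<forall>m1\<in>monoms g p. \<forall>m2\<in>monoms g p. \<forall>m3\<in>monoms g p.
           mless m1 m2 \<longrightarrow> mless m2 m3 \<longrightarrow> mless m1 m3)
     \<and> (\<forall>m1\<in>monoms g p. \<forall>m2\<in>monoms g p. m1 = m2 \<or> mless m1 m2 \<or> mless m2 m1)
     \<and> wf {(m1, m2). m1 \<in> monoms g p \<and> m2 \<in> monoms g p \<and> mless m1 m2}
     \<and> (\<forall>\<gamma>\<in>expos g. \<forall>\<alpha> k \<beta> l. (\<alpha>, k) \<in> monoms g p \<longrightarrow> (\<beta>, l) \<in> monoms g p \<longrightarrow>
           mless (\<alpha>, k) (\<beta>, l) \<longrightarrow> mless (\<lambda>j. \<gamma> j + \<alpha> j, k) (\<lambda>j. \<gamma> j + \<beta> j, l))"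

definition lead_mon :: "(mon \<Rightarrow> mon \<Rightarrow> bool) \<Rightarrow> (mon \<Rightarrow> 'a::zero) \<Rightarrow> mon" where
  "lead_mon mless u = (THE m. m \<in> supp u \<and> (\<forall>m'\<in>supp u. m' \<noteq> m \<longrightarrow> mless m' m))"

definition lead_term :: "(mon \<Rightarrow> mon \<Rightarrow> bool) \<Rightarrow> (mon \<Rightarrow> 'a::zero) \<Rightarrow> mon \<Rightarrow> 'a" where
  "lead_term mless u = (\<lambda>m. if m = lead_mon mless u then u m else 0)"

inductive_set A0_span :: "(mon \<Rightarrow> 'a::comm_ring_1) set \<Rightarrow> (mon \<Rightarrow> 'a) set"
  for S where
  zero: "(\<lambda>_. 0) \<in> A0_span S"
| step: "s \<in> S \<Longrightarrow> x \<in> A0_span S \<Longrightarrow> madd (msmul c s) x \<in> A0_span S"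

definition init_mod :: "(mon \<Rightarrow> mon \<Rightarrow> bool) \<Rightarrow> (mon \<Rightarrow> 'a::comm_ring_1) set \<Rightarrow> (mon \<Rightarrow> 'a) set" where
  "init_mod mless U = A0_span {lead_term mless u | u. u \<in> U \<and> u \<noteq> (\<lambda>_. 0)}"

text \<open>rho_{F/N}(v) = sup {i. (F/N)_(i,v) \<noteq> 0}, where for a graded submodule N,
  (F/N)_(i,v) = F_(i,v) / N_(i,v) is nonzero iff some homogeneous element of F of
  degree (i,v) is not in N.  Value in the extended reals (Sup {} = -\<infinity>).\<close>
definition rho :: "nat \<Rightarrow> nat \<Rightarrow> (nat \<Rightarrow> nat) \<Rightarrow> (nat \<Rightarrow> int \<times> int)
    \<Rightarrow> (mon \<Rightarrow> 'a::comm_ring_1) set \<Rightarrow> int \<Rightarrow> ereal" where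
  "rho g p d ed N v = Sup {ereal (real_of_int i) | i. \<exists>f. homog g p d ed i v f \<and> f \<notin> N}"

end

theory Submission
  imports Defs
begin

definition Ev :: "mon \<Rightarrow> mon \<Rightarrow> 'a::comm_ring_1" where
  "Ev m = (\<lambda>x. if x = m then 1 else 0)"

lemma sum_Ev: "finite T \<Longrightarrow> (\<Sum>t\<in>T. c t * (Ev t x :: 'a::comm_ring_1)) = (if x \<in> T then c x else 0)"
  by (simp add: Ev_def if_distrib[of "\<lambda>z. c _ * z"] sum.delta cong: if_cong)

lemma submod_sum:
  assumes "submod g p U" "finite T" "\<forall>t\<in>T. Ev t \<in> U"
  shows "(\<lambda>x. \<Sum>t\<in>T. c t * Ev t x) \<in> U"
  using assms(2,3)
proof (induction T rule: finite_induct)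
  case empty
  then show ?case using assms(1) by (simp add: submod_def)
next
  case (insert t T)
  have "(\<lambda>x. \<Sum>t\<in>insert t T. c t * Ev t x) = madd (msmul (c t) (Ev t)) (\<lambda>x. \<Sum>t\<in>T. c t * Ev t x)"
    using insert by (simp add: madd_def msmul_def fun_eq_iff)
  then show ?case using insert assms(1) unfolding submod_def by auto
qed

lemma span_sum:
  assumes "finite T" "\<forall>t\<in>T. Ev t \<in> S"
  shows "(\<lambda>x. \<Sum>t\<in>T. c t * Ev t x) \<in> A0_span S"
  using assms
proof (induction T rule: finite_induct)
  case empty
  then show ?case using A0_span.zero by simp
next
  case (insert t T)
  have "(\<lambda>x. \<Sum>t\<in>insert t T. c t * Ev t x) = madd (msmul (c t) (Ev t)) (\<lambda>x. \<Sum>t\<in>T. c t * Ev t x)"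
    using insert by (simp add: madd_def msmul_def fun_eq_iff)
  then show ?case using insert A0_span.step by auto
qed

lemma fun_expand:
  fixes f :: "mon \<Rightarrow> 'a::comm_ring_1"
  assumes "finite (supp f)"
  shows "f = (\<lambda>x. \<Sum>t\<in>supp f. f t * Ev t x)"
  using assms by (auto simp: fun_eq_iff sum_Ev supp_def)

lemma max_exists:
  assumes mo: "monomial_order g p mless" and "finite S" "S \<noteq> {}" "S \<subseteq> monoms g p"
  shows "\<exists>m\<in>S. \<forall>m'\<in>S. m' \<noteq> m \<longrightarrow> mless m' m"
  using assms(2,3,4)
proof (induction S rule: finite_ne_induct)
  case (singleton x)
  then show ?case by auto
next
  case (insert x F)
  have tr: "\<And>a b c. a \<in> monoms g p \<Longrightarrow> b \<in> monoms g p \<Longrightarrow> c \<in> monoms g p \<Longrightarrow> mless a b \<Longrightarrow> mless b c \<Longrightarrow> mless a c"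
    using mo unfolding monomial_order_def by blast
  have tot: "\<And>a b. a \<in> monoms g p \<Longrightarrow> b \<in> monoms g p \<Longrightarrow> a = b \<or> mless a b \<or> mless b a"
    using mo unfolding monomial_order_def by blast
  have "F \<subseteq> monoms g p" using insert.prems by simp
  then obtain m where m: "m \<in> F" "\<forall>m'\<in>F. m' \<noteq> m \<longrightarrow> mless m' m" using insert.IH by blast
  have xm: "x \<in> monoms g p" "m \<in> monoms g p" "F \<subseteq> monoms g p" using insert.prems m by auto
  show ?case
  proof (cases "mless x m \<or> x = m")
    case True
    then have "\<forall>m'\<in>insert x F. m' \<noteq> m \<longrightarrow> mless m' m" using m by blast
    then show ?thesis using m(1) by blast
  next
    case False
    then have mx: "mless m x" using tot[OF xm(1,2)] by blast
    have "\<forall>m'\<in>insert x F. m' \<noteq> x \<longrightarrow> mless m' x"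
    proof (intro ballI impI)
      fix m' assume a: "m' \<in> insert x F" "m' \<noteq> x"
      then have mF: "m' \<in> F" by blast
      show "mless m' x"
      proof (cases "m' = m")
        case True
        then show ?thesis using mx by simp
      next
        case False
        then have "mless m' m" using m mF by blast
        moreover have "m' \<in> monoms g p" using xm mF by blast
        ultimately show ?thesis using tr[of m' m x] xm mx by blast
      qed
    qed
    then show ?thesis by blast
  qed
qed

lemma mo_tr:
  assumes "monomial_order g p mless" "a \<in> monoms g p" "b \<in> monoms g p" "c \<in> monoms g p" "mless a b" "mless b c"
  shows "mless a c"
proof -
  have "\<forall>m1\<in>monoms g p. \<forall>m2\<in>monoms g p. \<forall>m3\<in>monoms g p.
           mless m1 m2 \<longrightarrow> mless m2 m3 \<longrightarrow> mless m1 m3"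
    using assms(1) unfolding monomial_order_def by (elim conjE)
  then show ?thesis using assms(2-6) by blast
qed

lemma mo_irr:
  assumes "monomial_order g p mless" "a \<in> monoms g p"
  shows "\<not> mless a a"
proof -
  have "\<forall>m\<in>monoms g p. \<not> mless m m"
    using assms(1) unfolding monomial_order_def by (elim conjE)
  then show ?thesis using assms(2) by blast
qed

lemma lead_props:
  assumes mo: "monomial_order g p mless" and u: "u \<in> freemod g p" "u \<noteq> (\<lambda>_. 0)"
  shows "lead_mon mless u \<in> supp u \<and> (\<forall>m'\<in>supp u. m' \<noteq> lead_mon mless u \<longrightarrow> mless m' (lead_mon mless u))"
proof -
  have fin: "finite (supp u)" "supp u \<subseteq> monoms g p" using u unfolding freemod_def by blast+
  have ne: "supp u \<noteq> {}"
  proof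
    assume "supp u = {}"
    then have "\<And>x. u x = 0" unfolding supp_def by blast
    then show False using u(2) by blast
  qed
  obtain m where m: "m \<in> supp u" "\<forall>m'\<in>supp u. m' \<noteq> m \<longrightarrow> mless m' m"
    using max_exists[OF mo fin(1) ne fin(2)] by blast
  have uniq: "m2 = m" if "m2 \<in> supp u" "\<forall>m'\<in>supp u. m' \<noteq> m2 \<longrightarrow> mless m' m2" for m2
  proof (rule ccontr)
    assume ne2: "m2 \<noteq> m"
    have a: "mless m2 m" using m(2) that(1) ne2 by blast
    have b: "mless m m2" using that(2) m(1) ne2[symmetric] by blast
    have c: "m \<in> monoms g p" "m2 \<in> monoms g p" using fin m(1) that(1) by blast+
    have "mless m m" using mo_tr[OF mo c(1) c(2) c(1) b a] .
    then show False using mo_irr[OF mo c(1)] by blast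
  qed
  have "lead_mon mless u = m"
    unfolding lead_mon_def
  proof (rule the_equality)
    show "m \<in> supp u \<and> (\<forall>m'\<in>supp u. m' \<noteq> m \<longrightarrow> mless m' m)" using m by blast
  next
    fix m2 assume "m2 \<in> supp u \<and> (\<forall>m'\<in>supp u. m' \<noteq> m2 \<longrightarrow> mless m' m2)"
    then show "m2 = m" using uniq by blast
  qed
  then show ?thesis using m by simp
qed

lemma key:
  assumes mo: "monomial_order g p mless" and gs: "graded_submod g p d ed U"
    and x: "x \<in> init_mod mless U"
  shows "\<exists>u\<in>U. u m = x m \<and> (\<forall>m'\<in>supp u. m' \<noteq> m \<longrightarrow> mless m' m)"
  using x unfolding init_mod_def
proof (induction x rule: A0_span.induct)
  case zero
  then show ?case using gs by (auto simp: graded_submod_def submod_def supp_def)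
next
  case (step s x c)
  then obtain u where u: "u \<in> U" "u m = x m" "\<forall>m'\<in>supp u. m' \<noteq> m \<longrightarrow> mless m' m" by auto
  from step obtain us where us: "s = lead_term mless us" "us \<in> U" "us \<noteq> (\<lambda>_. 0)" by auto
  have usf: "us \<in> freemod g p" using us gs by (auto simp: graded_submod_def submod_def)
  note lp = lead_props[OF mo usf us(3)]
  show ?case
  proof (cases "lead_mon mless us = m")
    case True
    let ?u = "madd (msmul c us) u"
    have "?u \<in> U" using gs us u unfolding graded_submod_def submod_def by auto
    moreover have "?u m = madd (msmul c s) x m"
      using True us u by (simp add: madd_def msmul_def lead_term_def)
    moreover have "\<forall>m'\<in>supp ?u. m' \<noteq> m \<longrightarrow> mless m' m"
    proof (intro ballI impI)
      fix m' assume "m' \<in> supp ?u" "m' \<noteq> m"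
      then have "m' \<in> supp us \<or> m' \<in> supp u" by (auto simp: supp_def madd_def msmul_def)
      then show "mless m' m" using lp True u \<open>m' \<noteq> m\<close> by auto
    qed
    ultimately show ?thesis by blast
  next
    case False
    have "madd (msmul c s) x m = x m" using False us by (simp add: madd_def msmul_def lead_term_def)
    then show ?thesis using u by metis
  qed
qed

lemma Ev_free: "m \<in> monoms g p \<Longrightarrow> mdeg g d ed m = (i, v) \<Longrightarrow> homog g p d ed i v (Ev m :: mon \<Rightarrow> 'a::comm_ring_1)"
proof -
  assume a: "m \<in> monoms g p" "mdeg g d ed m = (i, v)"
  have "supp (Ev m :: mon \<Rightarrow> 'a) = {m}" by (auto simp: supp_def Ev_def)
  then show ?thesis using a by (simp add: homog_def freemod_def)
qed

lemma Ev_in_U: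
  assumes mo: "monomial_order g p mless" and gs: "graded_submod g p d ed U"
    and all: "\<forall>f. homog g p d ed i v f \<longrightarrow> f \<in> init_mod mless U"
  shows "m \<in> monoms g p \<Longrightarrow> mdeg g d ed m = (i, v) \<Longrightarrow> Ev m \<in> U"
proof -
  let ?R = "{(m1, m2). m1 \<in> monoms g p \<and> m2 \<in> monoms g p \<and> mless m1 m2}"
  have wf: "wf ?R" using mo by (simp add: monomial_order_def)
  have sm: "submod g p U" using gs by (simp add: graded_submod_def)
  show "m \<in> monoms g p \<Longrightarrow> mdeg g d ed m = (i, v) \<Longrightarrow> Ev m \<in> U"
  proof (induction m rule: wf_induct_rule[OF wf])
    case (1 m)
    have "Ev m \<in> init_mod mless U" using all Ev_free[OF 1(2,3)] by blast
    from key[OF mo gs this, of m] obtain u where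
      u: "u \<in> U" "u m = 1" "\<forall>m'\<in>supp u. m' \<noteq> m \<longrightarrow> mless m' m" by (auto simp: Ev_def)
    define w where "w = hcomp g d ed (i, v) u"
    have wU: "w \<in> U" using gs u unfolding w_def graded_submod_def by auto
    have uf: "finite (supp u)" "supp u \<subseteq> monoms g p" using u sm by (auto simp: submod_def freemod_def)
    have sw: "supp w \<subseteq> supp u" by (auto simp: w_def hcomp_def supp_def)
    have finw: "finite (supp w)" using sw uf(1) by (rule finite_subset)
    have wm: "w m = 1" using u 1 by (simp add: w_def hcomp_def)
    have IH: "\<forall>t\<in>supp w - {m}. Ev t \<in> U"
    proof
      fix t assume t: "t \<in> supp w - {m}"
      have tu: "t \<in> supp u" "t \<noteq> m" using t sw by blast+
      have "t \<in> monoms g p" using tu uf by blast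
      moreover have "mless t m" using u(3) tu by blast
      moreover have "mdeg g d ed t = (i, v)"
      proof (rule ccontr)
        assume "mdeg g d ed t \<noteq> (i, v)"
        then have "w t = 0" unfolding w_def hcomp_def by simp
        then show False using t unfolding supp_def by blast
      qed
      ultimately have "t \<in> monoms g p" "mless t m" "mdeg g d ed t = (i, v)" by blast+
      then have "(t, m) \<in> ?R" using 1(2) by blast
      then show "Ev t \<in> U" using 1(1) \<open>t \<in> monoms g p\<close> \<open>mdeg g d ed t = (i, v)\<close> by blast
    qed
    let ?s = "(\<lambda>x. \<Sum>t\<in>supp w - {m}. w t * Ev t x)"
    have sU: "?s \<in> U" using submod_sum[OF sm _ IH] finw by auto
    have "Ev m = madd w (msmul (-1) ?s)"
    proof (rule ext)
      fix x
      have "?s x = (if x \<in> supp w - {m} then w x else 0)" using finw by (simp add: sum_Ev)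
      then show "Ev m x = madd w (msmul (-1) ?s) x"
        using wm by (auto simp: madd_def msmul_def Ev_def supp_def)
    qed
    moreover have "madd w (msmul (-1) ?s) \<in> U"
    proof -
      have "msmul (-1) ?s \<in> U" using sm sU unfolding submod_def by blast
      then show ?thesis using sm wU unfolding submod_def by blast
    qed
    ultimately show ?case by simp
  qed
qed

lemma sets_eq:
  fixes U :: "(mon \<Rightarrow> 'a::comm_ring_1) set"
  assumes mo: "monomial_order g p mless" and gs: "graded_submod g p d ed U"
  shows "(\<forall>f. homog g p d ed i v f \<longrightarrow> f \<in> U) \<longleftrightarrow> (\<forall>f. homog g p d ed i v f \<longrightarrow> f \<in> init_mod mless U)"
proof
  assume all: "\<forall>f. homog g p d ed i v f \<longrightarrow> f \<in> U"
  show "\<forall>f. homog g p d ed i v f \<longrightarrow> f \<in> init_mod mless U"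
  proof (intro allI impI)
    fix f :: "mon \<Rightarrow> 'a" assume hf: "homog g p d ed i v f"
    have fin: "finite (supp f)" "supp f \<subseteq> monoms g p" using hf by (auto simp: homog_def freemod_def)
    have "\<forall>t\<in>supp f. Ev t \<in> {lead_term mless u |u. u \<in> U \<and> u \<noteq> (\<lambda>_. 0)}"
    proof
      fix t assume t: "t \<in> supp f"
      have tU: "Ev t \<in> U" using all Ev_free[of t g p d ed i v] t fin hf by (auto simp: homog_def)
      have "(Ev t t :: 'a) \<noteq> 0" by (simp add: Ev_def)
      then have nz: "(Ev t :: mon \<Rightarrow> 'a) \<noteq> (\<lambda>_. 0)" by metis
      have "lead_mon mless (Ev t :: mon \<Rightarrow> 'a) = t"
        unfolding lead_mon_def
      proof (rule the_equality)
        show "t \<in> supp (Ev t :: mon \<Rightarrow> 'a) \<and> (\<forall>m'\<in>supp (Ev t :: mon \<Rightarrow> 'a). m' \<noteq> t \<longrightarrow> mless m' t)"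
          by (simp add: supp_def Ev_def)
      next
        fix m2 assume "m2 \<in> supp (Ev t :: mon \<Rightarrow> 'a) \<and> (\<forall>m'\<in>supp (Ev t :: mon \<Rightarrow> 'a). m' \<noteq> m2 \<longrightarrow> mless m' m2)"
        then show "m2 = t" by (simp add: supp_def Ev_def split: if_splits)
      qed
      then have "lead_term mless (Ev t :: mon \<Rightarrow> 'a) = Ev t" unfolding lead_term_def
        by (simp add: Ev_def fun_eq_iff)
      then show "Ev t \<in> {lead_term mless u |u. u \<in> U \<and> u \<noteq> (\<lambda>_. 0)}" using tU nz by force
    qed
    then have "(\<lambda>x. \<Sum>t\<in>supp f. f t * Ev t x) \<in> A0_span {lead_term mless u |u. u \<in> U \<and> u \<noteq> (\<lambda>_. 0)}"
      using span_sum fin(1) by blast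
    with fun_expand[OF fin(1)]
    show "f \<in> init_mod mless U" unfolding init_mod_def by metis
  qed
next
  assume all: "\<forall>f. homog g p d ed i v f \<longrightarrow> f \<in> init_mod mless U"
  show "\<forall>f. homog g p d ed i v f \<longrightarrow> f \<in> U"
  proof (intro allI impI)
    fix f :: "mon \<Rightarrow> 'a" assume hf: "homog g p d ed i v f"
    have fin: "finite (supp f)" "supp f \<subseteq> monoms g p" using hf by (auto simp: homog_def freemod_def)
    have "\<forall>t\<in>supp f. Ev t \<in> U" using Ev_in_U[OF mo gs all] fin hf by (auto simp: homog_def)
    then have "(\<lambda>x. \<Sum>t\<in>supp f. f t * Ev t x) \<in> U"
      using submod_sum fin(1) gs unfolding graded_submod_def by blast
    with fun_expand[OF fin(1)]
    show "f \<in> U" unfolding graded_submod_def by metis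
  qed
qed

theorem lemma3p2:
  fixes g p :: nat and d :: "nat \<Rightarrow> nat" and ed :: "nat \<Rightarrow> int \<times> int"
    and mless :: "mon \<Rightarrow> mon \<Rightarrow> bool"
    and U :: "(mon \<Rightarrow> 'a::comm_ring_1) set"
  assumes "monomial_order g p mless"
    and "graded_submod g p d ed U"
  shows "\<forall>v. rho g p d ed U v = rho g p d ed (init_mod mless U) v"
proof
  fix v
  have "\<And>i. (\<exists>f. homog g p d ed i v f \<and> f \<notin> U) \<longleftrightarrow> (\<exists>f. homog g p d ed i v f \<and> f \<notin> init_mod mless U)"
    using sets_eq[OF assms] by blast
  then show "rho g p d ed U v = rho g p d ed (init_mod mless U) v"
    unfolding rho_def by simp
qed

end
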